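(* For every distribution $\mathcal P$ on $\mathcal C^{d,k}$: if $\widehat{CSP}_{n,p}(\mathcal P)$ has a sharp threshold of satisfiability, then so does $CSP_{n,p}(\mathcal P)$. If $k\ge 3$, the converse also holds: if $CSP_{n,p}(\mathcal P)$ has a sharp threshold then so does $\widehat{CSP}_{n,p}(\mathcal P)$.
   Context: Fix integers $d\ge 2$ and $k\ge 2$. Variables of a CSP take values in $\{1,\dots,d\}$. A restriction is a $k$-tuple $(\delta_1,\dots,\delta_k)\in\{1,\dots,d\}^k$. A constraint on an ordered $k$-tuple $(x_1,\dots,x_k)$ of distinct variables is a set of restrictions; an assignment satisfies it if the tuple of values given to $(x_1,\dots,x_k)$ is not one of its restrictions. A CSP is satisfiable if some assignment satisfies all its constraints simultaneously. Let $\mathcal C^{d,k}$ be the set of all $2^{d^k}$ constraints on canonical variables $(X_1,\dots,X_k)$, let $\mathcal P$ be a probability distribution on $\mathcal C^{d,k}$, and ${\rm supp}(\mathcal P)=\{C:\mathcal P(C)>0\}$. The random CSP $CSP_{n,p}(\mathcal P)$ on $n$ variables: take a random $k$-uniform hypergraph in which each of the $\binom nk$ $k$-sets of variables is an edge independently with probability $p$; for each edge, map its $k$ variables onto $X_1,\dots,X_k$ by a uniformly random bijection and place on it an independent random constraint drawn from $\mathcal P$. The random CSP $\widehat{CSP}_{n,p}(\mathcal P)$: for each of the $n(n-1)\cdots(n-k+1)$ ordered $k$-tuples of distinct variables and each $C\in{\rm supp}(\mathcal P)$, independently place $C$ on that ordered tuple with probability $\mathcal P(C)\,p/k!$ (so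 a tuple may receive several constraints). A property holds almost surely (a.s.) if its probability tends to $1$ as $n\to\infty$. A random CSP model has a sharp threshold (of satisfiability) if there is a function $c(n)>0$ with $c(n)=\Theta(1)$ such that for every $\epsilon>0$, with $p=(1-\epsilon)c(n)/n^{k-1}$ it is a.s. satisfiable and with $p=(1+\epsilon)c(n)/n^{k-1}$ it is a.s. unsatisfiable. *)

theory Defs
  imports "HOL-Probability.Probability" "HOL-Library.Landau_Symbols"
begin

text \<open>Values are 1..d; variables are 0..n-1 (any n-element set would do).
  A constraint is a set of restrictions; the i-th entry of a restriction
  refers to the canonical variable X_(i+1).\<close>

definition restrictions :: "nat \<Rightarrow> nat \<Rightarrow> nat list set" where
  "restrictions d k = {r. length r = k \<and> set r \<subseteq> {1..d}}"

definition constraints :: "nat \<Rightarrow> nat \<Rightarrow> nat list set set" where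
  "constraints d k = Pow (restrictions d k)"

definition sat_constraint :: "(nat \<Rightarrow> nat) \<Rightarrow> nat list \<Rightarrow> nat list set \<Rightarrow> bool" where
  "sat_constraint \<sigma> xs C \<longleftrightarrow> map \<sigma> xs \<notin> C"

definition assignments :: "nat \<Rightarrow> nat \<Rightarrow> (nat \<Rightarrow> nat) set" where
  "assignments d n = {0..<n} \<rightarrow>\<^sub>E {1..d}"

definition ksets :: "nat \<Rightarrow> nat \<Rightarrow> nat set set" where
  "ksets n k = {S. S \<subseteq> {0..<n} \<and> card S = k}"

definition ktuples :: "nat \<Rightarrow> nat \<Rightarrow> nat list set" where
  "ktuples n k = {xs. distinct xs \<and> length xs = k \<and> set xs \<subseteq> {0..<n}}"

text \<open>Model CSP_{n,p}(P): for each k-set S, independently: with probability p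
  it becomes an edge, its variables are mapped to X_1..X_k by a uniformly
  random bijection (= uniformly random ordering xs of S) and a constraint C
  drawn from P is placed on it.\<close>
definition edge_pmf :: "real \<Rightarrow> nat list set pmf \<Rightarrow> nat set \<Rightarrow> (nat list \<times> nat list set) option pmf" where
  "edge_pmf p P S =
     do { b \<leftarrow> bernoulli_pmf p;
          if b then do { xs \<leftarrow> pmf_of_set {xs. distinct xs \<and> set xs = S};
                         C \<leftarrow> P;
                         return_pmf (Some (xs, C)) }
          else return_pmf None }"

definition CSP_model :: "nat \<Rightarrow> nat \<Rightarrow> real \<Rightarrow> nat list set pmf
      \<Rightarrow> (nat set \<Rightarrow> (nat list \<times> nat list set) option) pmf" where
  "CSP_model k n p P = Pi_pmf (ksets n k) None (edge_pmf p P)"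

definition CSP_satisfiable :: "nat \<Rightarrow> nat \<Rightarrow> nat \<Rightarrow> (nat set \<Rightarrow> (nat list \<times> nat list set) option) \<Rightarrow> bool" where
  "CSP_satisfiable d k n F \<longleftrightarrow>
     (\<exists>\<sigma>\<in>assignments d n. \<forall>S\<in>ksets n k.
        case F S of None \<Rightarrow> True | Some (xs, C) \<Rightarrow> sat_constraint \<sigma> xs C)"

definition CSP_sat_prob :: "nat \<Rightarrow> nat \<Rightarrow> nat list set pmf \<Rightarrow> nat \<Rightarrow> real \<Rightarrow> real" where
  "CSP_sat_prob d k P n p =
     measure_pmf.prob (CSP_model k n p P) {F. CSP_satisfiable d k n F}"

definition CSPhat_model :: "nat \<Rightarrow> nat \<Rightarrow> real \<Rightarrow> nat list set pmf
      \<Rightarrow> (nat list \<times> nat list set \<Rightarrow> bool) pmf" where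
  "CSPhat_model k n p P =
     Pi_pmf (ktuples n k \<times> set_pmf P) False
       (\<lambda>(xs, C). bernoulli_pmf (pmf P C * p / fact k))"

definition CSPhat_satisfiable :: "nat \<Rightarrow> nat \<Rightarrow> nat \<Rightarrow> nat list set pmf \<Rightarrow> (nat list \<times> nat list set \<Rightarrow> bool) \<Rightarrow> bool" where
  "CSPhat_satisfiable d k n P G \<longleftrightarrow>
     (\<exists>\<sigma>\<in>assignments d n. \<forall>xs\<in>ktuples n k. \<forall>C\<in>set_pmf P.
        G (xs, C) \<longrightarrow> sat_constraint \<sigma> xs C)"

definition CSPhat_sat_prob :: "nat \<Rightarrow> nat \<Rightarrow> nat list set pmf \<Rightarrow> nat \<Rightarrow> real \<Rightarrow> real" where
  "CSPhat_sat_prob d k P n p =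
     measure_pmf.prob (CSPhat_model k n p P) {G. CSPhat_satisfiable d k n P G}"

definition sharp_threshold :: "nat \<Rightarrow> (nat \<Rightarrow> real \<Rightarrow> real) \<Rightarrow> bool" where
  "sharp_threshold k sp \<longleftrightarrow>
     (\<exists>c :: nat \<Rightarrow> real. (\<forall>n. c n > 0) \<and> c \<in> \<Theta>(\<lambda>_. 1) \<and>
        (\<forall>\<epsilon>>0.
           ((\<lambda>n. sp n ((1 - \<epsilon>) * c n / real n ^ (k - 1))) \<longlonglongrightarrow> 1) \<and>
           ((\<lambda>n. sp n ((1 + \<epsilon>) * c n / real n ^ (k - 1))) \<longlonglongrightarrow> 0)))"

end

theory Submission
  imports Defs "HOL-Combinatorics.Multiset_Permutations"
begin

definition grp :: "'j set \<Rightarrow> ('j \<Rightarrow> 'i) \<Rightarrow> 'i set \<Rightarrow> 'b \<Rightarrow> ('j \<Rightarrow> 'b) \<Rightarrow> 'i \<Rightarrow> 'j \<Rightarrow> 'b" where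
  "grp J g I d G = (\<lambda>i. if i \<in> I then (\<lambda>j. if j \<in> J \<and> g j = i then G j else d) else (\<lambda>_. d))"

lemma Pi_pmf_group:
  assumes fJ: "finite J" and fI: "finite I" and gJ: "g ` J \<subseteq> I"
  shows "map_pmf (grp J g I d) (Pi_pmf J d p) = Pi_pmf I (\<lambda>_. d) (\<lambda>i. Pi_pmf {j\<in>J. g j = i} d p)"
proof (rule pmf_eqI)
  fix H
  let ?good = "(\<forall>i. i \<notin> I \<longrightarrow> H i = (\<lambda>_. d)) \<and> (\<forall>i\<in>I. \<forall>j. \<not>(j\<in>J \<and> g j = i) \<longrightarrow> H i j = d)"
  show "pmf (map_pmf (grp J g I d) (Pi_pmf J d p)) H = pmf (Pi_pmf I (\<lambda>_. d) (\<lambda>i. Pi_pmf {j\<in>J. g j = i} d p)) H"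
  proof (cases ?good)
    case True
    define G0 where "G0 = (\<lambda>j. if j\<in>J then H (g j) j else d)"
    have "pmf (map_pmf (grp J g I d) (Pi_pmf J d p)) H = measure (Pi_pmf J d p) (grp J g I d -` {H})"
      by (simp add: pmf_map)
    also have "\<dots> = measure (Pi_pmf J d p) {G0}"
    proof (rule measure_prob_cong_0)
      fix G assume G: "G \<in> grp J g I d -` {H} - {G0}"
      show "pmf (Pi_pmf J d p) G = 0"
      proof (rule pmf_Pi_outside[OF fJ], rule ccontr)
        assume "\<not> (\<exists>x. x \<notin> J \<and> G x \<noteq> d)"
        hence out: "\<And>x. x \<notin> J \<Longrightarrow> G x = d" by blast
        have "G = G0"
        proof
          fix j show "G j = G0 j"
          proof (cases "j \<in> J")
            case True
            with gJ have "g j \<in> I" by auto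
            from G have "grp J g I d G (g j) j = H (g j) j" by auto
            with True \<open>g j \<in> I\<close> show ?thesis by (simp add: grp_def G0_def)
          qed (simp add: out G0_def)
        qed
        with G show False by auto
      qed
    next
      fix G assume G: "G \<in> {G0} - grp J g I d -` {H}"
      have "grp J g I d G0 = H"
      proof (intro ext)
        fix i j show "grp J g I d G0 i j = H i j"
          using True by (auto simp: grp_def G0_def)
      qed
      with G show "pmf (Pi_pmf J d p) G = 0" by auto
    qed
    also have "\<dots> = pmf (Pi_pmf J d p) G0" by (simp add: measure_pmf_single)
    also have "\<dots> = (\<Prod>j\<in>J. pmf (p j) (H (g j) j))"
      by (subst pmf_Pi') (auto simp: fJ G0_def)
    also have "\<dots> = (\<Prod>i\<in>I. \<Prod>j\<in>{j\<in>J. g j = i}. pmf (p j) (H (g j) j))"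
      by (rule prod.group[OF fJ fI gJ, symmetric])
    also have "\<dots> = (\<Prod>i\<in>I. pmf (Pi_pmf {j\<in>J. g j = i} d p) (H i))"
    proof (rule prod.cong[OF refl])
      fix i assume i: "i \<in> I"
      have "pmf (Pi_pmf {j\<in>J. g j = i} d p) (H i) = (\<Prod>j\<in>{j\<in>J. g j = i}. pmf (p j) (H i j))"
        using True i fJ by (subst pmf_Pi') auto
      also have "\<dots> = (\<Prod>j\<in>{j\<in>J. g j = i}. pmf (p j) (H (g j) j))"
        by (rule prod.cong) auto
      finally show "(\<Prod>j\<in>{j\<in>J. g j = i}. pmf (p j) (H (g j) j)) = pmf (Pi_pmf {j\<in>J. g j = i} d p) (H i)" by simp
    qed
    also have "\<dots> = pmf (Pi_pmf I (\<lambda>_. d) (\<lambda>i. Pi_pmf {j\<in>J. g j = i} d p)) H"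
      using True fI by (subst pmf_Pi') auto
    finally show ?thesis .
  next
    case False
    have "grp J g I d -` {H} = {}"
      using False by (auto simp: grp_def fun_eq_iff split: if_splits)
    hence l: "pmf (map_pmf (grp J g I d) (Pi_pmf J d p)) H = 0" by (simp add: pmf_map)
    have "pmf (Pi_pmf I (\<lambda>_. d) (\<lambda>i. Pi_pmf {j\<in>J. g j = i} d p)) H = 0"
    proof (cases "\<forall>i. i \<notin> I \<longrightarrow> H i = (\<lambda>_. d)")
      case True
      with False obtain i j where ij: "i \<in> I" "\<not>(j\<in>J \<and> g j = i)" "H i j \<noteq> d" by blast
      have "pmf (Pi_pmf {j\<in>J. g j = i} d p) (H i) = 0"
        using ij fJ by (intro pmf_Pi_outside) auto
      hence "(\<Prod>i\<in>I. pmf (Pi_pmf {j\<in>J. g j = i} d p) (H i)) = 0"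
        using ij(1) fI by (intro prod_zero) auto
      thus ?thesis using True fI by (subst pmf_Pi') auto
    next
      case F2: False
      thus ?thesis using fI by (intro pmf_Pi_outside) auto
    qed
    with l show ?thesis by simp
  qed
qed

definition thinT :: "real \<Rightarrow> ('a \<Rightarrow> real) \<Rightarrow> 'a option \<Rightarrow> 'a option option pmf" where
  "thinT g r ov = bind_pmf (bernoulli_pmf g) (\<lambda>b. if b then (case ov of None \<Rightarrow> return_pmf (Some None)
      | Some x \<Rightarrow> map_pmf (\<lambda>c. if c then Some (Some x) else Some None) (bernoulli_pmf (r x)))
      else return_pmf None)"

lemma vim_None[simp]: "(\<lambda>c. if c then Some (Some x) else Some None) -` {None} = {}" by (auto split: if_splits)

lemma set_thinT: "y \<in> set_pmf (thinT g r ov) \<Longrightarrow> y = None \<or> y = Some None \<or> (\<exists>x. ov = Some x \<and> y = Some (Some x))"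
  by (auto simp: thinT_def split: option.splits if_splits)

lemma pmf_thinT_None:
  assumes "0 \<le> g" "g \<le> 1"
  shows "pmf (thinT g r ov) None = 1 - g"
  using assms by (auto simp: thinT_def pmf_bind pmf_map split: option.splits)

lemma pmf_thinT_SS:
  assumes "0 \<le> g" "g \<le> 1" "0 \<le> r x" "r x \<le> 1"
  shows "pmf (thinT g r ov) (Some (Some x)) = g * (if ov = Some x then r x else 0)"
proof -
  have "pmf (map_pmf (\<lambda>c. if c then Some (Some x) else Some None) (bernoulli_pmf (r x))) (Some (Some x)) = r x"
  proof -
    have "(\<lambda>c. if c then Some (Some x) else Some None) -` {Some (Some x)} = {True}" by (auto split: if_splits)
    thus ?thesis using assms by (simp add: pmf_map measure_pmf_single)
  qed
  moreover have "pmf (map_pmf (\<lambda>c. if c then Some (Some y) else Some None) (bernoulli_pmf (r y))) (Some (Some x)) = 0"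
    if "y \<noteq> x" for y
  proof -
    have "(\<lambda>c. if c then Some (Some y) else Some None) -` {Some (Some x)} = {}" using that by (auto split: if_splits)
    thus ?thesis by (simp add: pmf_map)
  qed
  ultimately show ?thesis using assms
    by (cases ov) (auto simp: thinT_def pmf_bind)
qed

lemma pmf_eq_via_others:
  fixes X Y :: "'a pmf"
  assumes "\<And>z. z \<noteq> a \<Longrightarrow> pmf X z = pmf Y z"
  shows "X = Y"
proof (rule pmf_eqI)
  fix z
  show "pmf X z = pmf Y z"
  proof (cases "z = a")
    case True
    have "measure X (UNIV - {a}) = measure Y (UNIV - {a})"
      unfolding measure_pmf_conv_infsetsum using assms by (intro infsetsum_cong) auto
    hence "1 - measure X {a} = 1 - measure Y {a}"
      by (simp add: measure_pmf.prob_compl[symmetric])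
    thus ?thesis using True by (simp add: measure_pmf_single)
  qed (use assms in auto)
qed

lemma thin_decomp:
  fixes A :: "'a option pmf" and M :: "'a option option pmf"
  assumes g: "0 \<le> g" "g \<le> 1" and Mn: "pmf M None = 1 - g"
    and Mle: "\<And>x. pmf M (Some (Some x)) \<le> g * pmf A (Some x)"
  defines "r \<equiv> (\<lambda>x. pmf M (Some (Some x)) / (g * pmf A (Some x)))"
  shows "M = bind_pmf A (thinT g r)"
proof (rule pmf_eq_via_others[where a="Some None"])
  have r01: "0 \<le> r x \<and> r x \<le> 1" for x
    using Mle[of x] g unfolding r_def by (auto simp: divide_le_eq_1)
  fix z :: "'a option option" assume z: "z \<noteq> Some None"
  show "pmf M z = pmf (bind_pmf A (thinT g r)) z"
  proof (cases z)
    case None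
    thus ?thesis using g Mn by (simp add: pmf_bind pmf_thinT_None)
  next
    case (Some z')
    with z obtain x where x: "z = Some (Some x)" by (cases z') auto
    have "pmf (bind_pmf A (thinT g r)) z = measure_pmf.expectation A (\<lambda>ov. g * r x * indicator {Some x} ov)"
      unfolding x pmf_bind using r01 g
      by (intro Bochner_Integration.integral_cong) (auto simp: pmf_thinT_SS indicator_def)
    also have "\<dots> = g * r x * pmf A (Some x)"
      by (simp add: measure_pmf_single)
    also have "\<dots> = pmf M z"
    proof (cases "g * pmf A (Some x) = 0")
      case True
      with Mle[of x] have h2: "pmf M (Some (Some x)) = 0" by (simp add: antisym)
      have h1: "g * r x * pmf A (Some x) = 0" using True by (metis mult.commute mult.left_commute mult_zero_right)
      show ?thesis by (simp only: h1 h2 x)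
    next
      case False thus ?thesis unfolding r_def x by simp
    qed
    finally show ?thesis by simp
  qed
qed

lemma coupling:
  fixes A :: "'i \<Rightarrow> 'a option pmf" and M :: "'i \<Rightarrow> 'a option option pmf" and g :: "'i \<Rightarrow> real"
  assumes fI: "finite I"
    and g01: "\<And>i. i \<in> I \<Longrightarrow> 0 \<le> g i \<and> g i \<le> 1"
    and Mn: "\<And>i. i \<in> I \<Longrightarrow> pmf (M i) None = 1 - g i"
    and Mle: "\<And>i x. i \<in> I \<Longrightarrow> pmf (M i) (Some (Some x)) \<le> g i * pmf (A i) (Some x)"
    and Qanti: "\<And>F F'. Q F \<Longrightarrow> (\<forall>i. F' i = F i \<or> F' i = None) \<Longrightarrow> Q F'"
  shows "(\<Prod>i\<in>I. g i) * measure (Pi_pmf I None A) {F. Q F}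
      \<le> measure (Pi_pmf I (Some None) M) {F. (\<forall>i\<in>I. F i \<noteq> None) \<and> Q (\<lambda>i. the (F i))}"
proof -
  define r where "r = (\<lambda>i x. pmf (M i) (Some (Some x)) / (g i * pmf (A i) (Some x)))"
  define K where "K = (\<lambda>F. Pi_pmf I (Some None) (\<lambda>i. thinT (g i) (r i) (F i)))"
  let ?E = "{F. (\<forall>i\<in>I. F i \<noteq> None) \<and> Q (\<lambda>i. the (F i))}"
  have "Pi_pmf I (Some None) M = Pi_pmf I (Some None) (\<lambda>i. bind_pmf (A i) (thinT (g i) (r i)))"
    using g01 Mn Mle unfolding r_def by (intro Pi_pmf_cong refl thin_decomp) auto
  also have "\<dots> = bind_pmf (Pi_pmf I None A) K"
    unfolding K_def by (rule Pi_pmf_bind[OF fI])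
  finally have eq: "Pi_pmf I (Some None) M = bind_pmf (Pi_pmf I None A) K" .
  have key: "(\<Prod>i\<in>I. g i) * indicator {F. Q F} F \<le> measure (K F) ?E" for F
  proof (cases "Q F")
    case False
    thus ?thesis by simp
  next
    case True
    have "measure (K F) (Pi I (\<lambda>_. {y. y \<noteq> None})) = (\<Prod>i\<in>I. measure (thinT (g i) (r i) (F i)) {y. y \<noteq> None})"
      unfolding K_def by (rule measure_Pi_pmf_Pi[OF fI])
    also have "\<dots> = (\<Prod>i\<in>I. g i)"
    proof (rule prod.cong[OF refl])
      fix i assume i: "i \<in> I"
      have e: "{y. y \<noteq> None} = UNIV - {None}" by auto
      have "measure (thinT (g i) (r i) (F i)) {y. y \<noteq> None} = measure (thinT (g i) (r i) (F i)) (UNIV - {None})"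
        by (simp only: e)
      also have "\<dots> = 1 - measure (thinT (g i) (r i) (F i)) {None}"
        using measure_pmf.prob_compl[of "{None}" "thinT (g i) (r i) (F i)"] by simp
      finally have "measure (thinT (g i) (r i) (F i)) {y. y \<noteq> None} = 1 - pmf (thinT (g i) (r i) (F i)) None"
        by (simp add: measure_pmf_single)
      thus "measure (thinT (g i) (r i) (F i)) {y. y \<noteq> None} = g i"
        using g01[OF i] by (simp add: pmf_thinT_None)
    qed
    finally have m1: "measure (K F) (Pi I (\<lambda>_. {y. y \<noteq> None})) = (\<Prod>i\<in>I. g i)" .
    have "measure (K F) (Pi I (\<lambda>_. {y. y \<noteq> None})) = measure (K F) (Pi I (\<lambda>_. {y. y \<noteq> None}) \<inter> set_pmf (K F))"
      by (simp add: measure_Int_set_pmf)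
    also have "\<dots> \<le> measure (K F) ?E"
    proof (rule measure_pmf.finite_measure_mono)
      show "Pi I (\<lambda>_. {y. y \<noteq> None}) \<inter> set_pmf (K F) \<subseteq> ?E"
      proof
        fix F' assume F': "F' \<in> Pi I (\<lambda>_. {y. y \<noteq> None}) \<inter> set_pmf (K F)"
        have supp: "F' \<in> PiE_dflt I (Some None) (\<lambda>i. set_pmf (thinT (g i) (r i) (F i)))"
          using F' set_Pi_pmf_subset'[OF fI, of "Some None" "\<lambda>i. thinT (g i) (r i) (F i)"]
          unfolding K_def by (auto simp: o_def)
        have "\<forall>i. (\<lambda>i. the (F' i)) i = F i \<or> (\<lambda>i. the (F' i)) i = None"
        proof
          fix i show "the (F' i) = F i \<or> the (F' i) = None"
          proof (cases "i \<in> I")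
            case True
            with supp have s1: "F' i \<in> set_pmf (thinT (g i) (r i) (F i))" by (auto simp: PiE_dflt_def)
            have "F' \<in> Pi I (\<lambda>_. {y. y \<noteq> None})" using F' by (rule IntD1)
            from Pi_mem[OF this True] have s2: "F' i \<noteq> None" by simp
            from set_thinT[OF s1] s2 show ?thesis by (elim disjE exE) auto
          next
            case False
            with supp show ?thesis by (auto simp: PiE_dflt_def)
          qed
        qed
        hence "Q (\<lambda>i. the (F' i))" using Qanti[OF True, of "\<lambda>i. the (F' i)"] by simp
        with F' show "F' \<in> ?E" by auto
      qed
    qed simp
    finally show ?thesis using True m1 by simp
  qed
  have P0: "0 \<le> (\<Prod>i\<in>I. g i)" using g01 by (intro prod_nonneg) auto
  have "ennreal ((\<Prod>i\<in>I. g i) * measure (Pi_pmf I None A) {F. Q F})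
      = ennreal (\<Prod>i\<in>I. g i) * emeasure (Pi_pmf I None A) {F. Q F}"
    by (simp add: measure_pmf.emeasure_eq_measure ennreal_mult' P0)
  also have "\<dots> = (\<integral>\<^sup>+F. ennreal (\<Prod>i\<in>I. g i) * indicator {F. Q F} F \<partial>Pi_pmf I None A)"
    by (rule nn_integral_cmult_indicator[symmetric]) simp
  also have "\<dots> = (\<integral>\<^sup>+F. ennreal ((\<Prod>i\<in>I. g i) * indicator {F. Q F} F) \<partial>Pi_pmf I None A)"
    by (intro nn_integral_cong) (simp add: ennreal_mult' P0 ennreal_indicator)
  also have "\<dots> \<le> (\<integral>\<^sup>+F. ennreal (measure (K F) ?E) \<partial>Pi_pmf I None A)"
    by (intro nn_integral_mono ennreal_leI key)
  also have "\<dots> = emeasure (bind_pmf (Pi_pmf I None A) K) ?E"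
    by (subst emeasure_bind_pmf) (simp only: measure_pmf.emeasure_eq_measure)
  also have "\<dots> = ennreal (measure (Pi_pmf I (Some None) M) ?E)"
    by (simp only: eq measure_pmf.emeasure_eq_measure)
  finally have "ennreal ((\<Prod>i\<in>I. g i) * measure (Pi_pmf I None A) {F. Q F}) \<le> ennreal (measure (Pi_pmf I (Some None) M) ?E)" .
  thus ?thesis by (subst (asm) ennreal_le_iff) auto
qed

interpretation pmf_as_function .

lemma pmf_bernoulli_True_clamp: "pmf (bernoulli_pmf a) True = max 0 (min 1 a)"
  by transfer simp

lemma pmf_bernoulli_False_clamp: "pmf (bernoulli_pmf a) False = 1 - max 0 (min 1 a)"
  by transfer simp

lemma prod_one_minus_ge:
  fixes a :: "'a \<Rightarrow> real"
  assumes "finite A" "\<And>j. j \<in> A \<Longrightarrow> 0 \<le> a j \<and> a j \<le> 1"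
  shows "1 - (\<Sum>j\<in>A. a j) \<le> (\<Prod>j\<in>A. 1 - a j)"
  using assms
proof (induction A rule: finite_induct)
  case empty thus ?case by simp
next
  case (insert x A)
  have IH: "1 - (\<Sum>j\<in>A. a j) \<le> (\<Prod>j\<in>A. 1 - a j)" using insert by auto
  have ax: "0 \<le> a x" "a x \<le> 1" using insert by auto
  have s0: "0 \<le> (\<Sum>j\<in>A. a j)" using insert by (intro sum_nonneg) auto
  have p0: "(\<Prod>j\<in>A. 1 - a j) \<le> 1" using insert by (intro prod_le_1) auto
  have "1 - (\<Sum>j\<in>insert x A. a j) = 1 - a x - (\<Sum>j\<in>A. a j)" using insert by simp
  also have "\<dots> \<le> (1 - a x) * (1 - (\<Sum>j\<in>A. a j))" using ax s0 by (simp add: algebra_simps mult_nonneg_nonneg)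
  also have "\<dots> \<le> (1 - a x) * (\<Prod>j\<in>A. 1 - a j)" using IH ax by (intro mult_left_mono) auto
  also have "\<dots> = (\<Prod>j\<in>insert x A. 1 - a j)" using insert by simp
  finally show ?case .
qed

definition JJ :: "nat \<Rightarrow> nat \<Rightarrow> nat list set pmf \<Rightarrow> (nat list \<times> nat list set) set" where
  "JJ n k P = ktuples n k \<times> set_pmf P"

definition gset :: "nat list \<times> nat list set \<Rightarrow> nat set" where
  "gset j = set (fst j)"

definition bfun :: "nat \<Rightarrow> real \<Rightarrow> nat list set pmf \<Rightarrow> nat list \<times> nat list set \<Rightarrow> bool pmf" where
  "bfun k p P = (\<lambda>(xs, C). bernoulli_pmf (pmf P C * p / fact k))"

definition JS :: "nat \<Rightarrow> nat \<Rightarrow> nat list set pmf \<Rightarrow> nat set \<Rightarrow> (nat list \<times> nat list set) set" where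
  "JS n k P S = {j \<in> JJ n k P. gset j = S}"

definition ES where "ES n k p P S = Pi_pmf (JS n k P S) False (bfun k p P)"

definition qcf :: "nat \<Rightarrow> real \<Rightarrow> nat list set pmf \<Rightarrow> nat list \<times> nat list set \<Rightarrow> real" where
  "qcf k p P j = pmf (bfun k p P j) True"

lemma hat_eq: "CSPhat_model k n p P = Pi_pmf (JJ n k P) False (bfun k p P)"
  by (simp add: CSPhat_model_def JJ_def bfun_def)

lemma finite_restrictions: "finite (restrictions d k)"
proof -
  have "restrictions d k = {xs. set xs \<subseteq> {1..d} \<and> length xs = k}"
    by (auto simp: restrictions_def)
  thus ?thesis using finite_lists_length_eq[of "{1..d}" k] by simp
qed

lemma finite_constraints: "finite (constraints d k)"
  by (simp add: constraints_def finite_restrictions)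

lemma finite_ktuples: "finite (ktuples n k)"
proof -
  have "ktuples n k \<subseteq> {xs. set xs \<subseteq> {0..<n} \<and> length xs = k}"
    by (auto simp: ktuples_def)
  thus ?thesis using finite_lists_length_eq[of "{0..<n}" k] finite_subset by blast
qed

lemma finite_ksets: "finite (ksets n k)"
proof -
  have "ksets n k \<subseteq> Pow {0..<n}" by (auto simp: ksets_def)
  thus ?thesis by (rule finite_subset) simp
qed

lemma finite_JJ: "finite (set_pmf P) \<Longrightarrow> finite (JJ n k P)"
  by (simp add: JJ_def finite_ktuples)

lemma gset_JJ: "gset ` JJ n k P \<subseteq> ksets n k"
  by (auto simp: gset_def JJ_def ktuples_def ksets_def distinct_card)

lemma JS_eq: assumes "S \<in> ksets n k" shows "JS n k P S = permutations_of_set S \<times> set_pmf P"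
proof (intro set_eqI iffI)
  fix j assume "j \<in> JS n k P S"
  thus "j \<in> permutations_of_set S \<times> set_pmf P"
    by (cases j) (simp add: JS_def JJ_def gset_def ktuples_def permutations_of_set_def)
next
  fix j assume j: "j \<in> permutations_of_set S \<times> set_pmf P"
  obtain xs C where jj: "j = (xs, C)" by (cases j)
  have d: "distinct xs" and s: "set xs = S" and c: "C \<in> set_pmf P"
    using j jj by (auto simp: permutations_of_set_def)
  have "length xs = k" using distinct_card[OF d] s assms by (simp add: ksets_def)
  moreover have "set xs \<subseteq> {0..<n}" using s assms by (simp add: ksets_def)
  ultimately show "j \<in> JS n k P S" using d s c jj by (simp add: JS_def JJ_def gset_def ktuples_def)
qed

lemma finite_JS: "finite (set_pmf P) \<Longrightarrow> finite (JS n k P S)"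
  unfolding JS_def using finite_JJ by auto

lemma qcf_eq:
  assumes "p \<le> 1"
  shows "qcf k p P (xs, C) = pmf P C * max 0 p / fact k"
proof -
  have f1: "(1::real) \<le> fact k" by (rule fact_ge_1)
  have a1: "pmf P C \<le> 1" by (rule pmf_le_1)
  have "pmf P C * p / fact k \<le> 1"
  proof -
    have "pmf P C * p \<le> pmf P C * max 0 p" by (intro mult_left_mono) auto
    also have "\<dots> \<le> 1" using a1 assms by (intro mult_le_one) auto
    finally have "pmf P C * p \<le> 1" .
    hence "pmf P C * p \<le> fact k" using f1 by linarith
    thus ?thesis by (simp add: divide_le_eq)
  qed
  hence "max 0 (min 1 (pmf P C * p / fact k)) = max 0 (pmf P C * p / fact k)" by simp
  also have "\<dots> = pmf P C * max 0 p / fact k"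
  proof (cases "p \<ge> 0")
    case True
    have "0 \<le> pmf P C * p / fact k" using True by simp
    thus ?thesis using True by simp
  next
    case False
    have "pmf P C * p / fact k \<le> 0" using False by (simp add: divide_nonpos_pos mult_nonneg_nonpos)
    thus ?thesis using False by simp
  qed
  finally show ?thesis by (simp add: qcf_def bfun_def pmf_bernoulli_True_clamp)
qed

lemma qcf_01: "0 \<le> qcf k p P j \<and> qcf k p P j \<le> 1"
  by (simp add: qcf_def pmf_le_1)

lemma pmf_bfun_False: "pmf (bfun k p P j) False = 1 - qcf k p P j"
  by (cases j) (simp add: qcf_def bfun_def pmf_bernoulli_True_clamp pmf_bernoulli_False_clamp)

lemma sum_qcf:
  assumes "S \<in> ksets n k" "p \<le> 1" "finite (set_pmf P)"
  shows "(\<Sum>j\<in>JS n k P S. qcf k p P j) = max 0 p"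
proof -
  have fS: "finite S" using assms(1) by (auto simp: ksets_def intro: finite_subset)
  have cS: "card S = k" using assms(1) by (auto simp: ksets_def)
  have "(\<Sum>j\<in>JS n k P S. qcf k p P j) = (\<Sum>xs\<in>permutations_of_set S. \<Sum>C\<in>set_pmf P. pmf P C * max 0 p / fact k)"
    unfolding JS_eq[OF assms(1)] sum.cartesian_product using assms(2)
    by (intro sum.cong refl) (auto simp: qcf_eq)
  also have "\<dots> = fact k * ((\<Sum>C\<in>set_pmf P. pmf P C) * max 0 p / fact k)"
    using fS cS by (simp add: sum_divide_distrib[symmetric] sum_distrib_right[symmetric])
  also have "(\<Sum>C\<in>set_pmf P. pmf P C) = 1" using assms(3) by (intro sum_pmf_eq_1) auto
  finally show ?thesis by simp
qed

lemma pmf_ES_single: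
  assumes "x \<in> JS n k P S" "finite (set_pmf P)"
  shows "pmf (ES n k p P S) (\<lambda>j. j = x) = qcf k p P x * (\<Prod>j\<in>JS n k P S - {x}. 1 - qcf k p P j)"
proof -
  have f: "finite (JS n k P S)" using finite_JS[OF assms(2)] .
  have "pmf (ES n k p P S) (\<lambda>j. j = x) = (\<Prod>j\<in>JS n k P S. pmf (bfun k p P j) (j = x))"
    unfolding ES_def using assms f by (subst pmf_Pi') auto
  also have "\<dots> = pmf (bfun k p P x) (x = x) * (\<Prod>j\<in>JS n k P S - {x}. pmf (bfun k p P j) (j = x))"
    using f assms(1) by (rule prod.remove)
  also have "(\<Prod>j\<in>JS n k P S - {x}. pmf (bfun k p P j) (j = x)) = (\<Prod>j\<in>JS n k P S - {x}. 1 - qcf k p P j)"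
    by (intro prod.cong refl) (auto simp: pmf_bfun_False)
  finally show ?thesis by (simp add: qcf_def)
qed

lemma pmf_ES_empty:
  assumes "finite (set_pmf P)"
  shows "pmf (ES n k p P S) (\<lambda>j. False) = (\<Prod>j\<in>JS n k P S. 1 - qcf k p P j)"
  unfolding ES_def using finite_JS[OF assms]
  by (subst pmf_Pi') (auto simp: pmf_bfun_False)

lemma pmf_ES_single_bounds:
  assumes "x \<in> JS n k P S" "finite (set_pmf P)" "S \<in> ksets n k" "p \<le> 1"
  shows "qcf k p P x * (1 - max 0 p) \<le> pmf (ES n k p P S) (\<lambda>j. j = x)"
    and "pmf (ES n k p P S) (\<lambda>j. j = x) \<le> qcf k p P x"
proof -
  have f: "finite (JS n k P S)" using finite_JS[OF assms(2)] .
  have "1 - max 0 p = 1 - (\<Sum>j\<in>JS n k P S. qcf k p P j)" using sum_qcf assms by simp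
  also have "\<dots> \<le> 1 - (\<Sum>j\<in>JS n k P S - {x}. qcf k p P j)"
    using f qcf_01 by (intro diff_left_mono sum_mono2) auto
  also have "\<dots> \<le> (\<Prod>j\<in>JS n k P S - {x}. 1 - qcf k p P j)"
    using f qcf_01 by (intro prod_one_minus_ge) auto
  finally have "qcf k p P x * (1 - max 0 p) \<le> qcf k p P x * (\<Prod>j\<in>JS n k P S - {x}. 1 - qcf k p P j)"
    using qcf_01 by (intro mult_left_mono) auto
  thus "qcf k p P x * (1 - max 0 p) \<le> pmf (ES n k p P S) (\<lambda>j. j = x)"
    using pmf_ES_single[OF assms(1,2)] by simp
  have "(\<Prod>j\<in>JS n k P S - {x}. 1 - qcf k p P j) \<le> 1"
    using qcf_01 by (intro prod_le_1) auto
  hence "qcf k p P x * (\<Prod>j\<in>JS n k P S - {x}. 1 - qcf k p P j) \<le> qcf k p P x"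
    using qcf_01 by (intro mult_left_le) auto
  thus "pmf (ES n k p P S) (\<lambda>j. j = x) \<le> qcf k p P x"
    using pmf_ES_single[OF assms(1,2)] by simp
qed

lemma pmf_ES_empty_bound:
  assumes "finite (set_pmf P)" "S \<in> ksets n k" "p \<le> 1"
  shows "1 - max 0 p \<le> pmf (ES n k p P S) (\<lambda>j. False)"
proof -
  have f: "finite (JS n k P S)" using finite_JS[OF assms(1)] .
  have "1 - max 0 p = 1 - (\<Sum>j\<in>JS n k P S. qcf k p P j)" using sum_qcf assms by simp
  also have "\<dots> \<le> (\<Prod>j\<in>JS n k P S. 1 - qcf k p P j)"
    using f qcf_01 by (intro prod_one_minus_ge) auto
  finally show ?thesis using pmf_ES_empty[OF assms(1)] by simp
qed

lemma bernoulli_clamp: "bernoulli_pmf a = bernoulli_pmf (max 0 (min 1 a))"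
proof (rule pmf_eqI)
  have T: "pmf (bernoulli_pmf a) True = pmf (bernoulli_pmf (max 0 (min 1 a))) True"
    by (simp only: pmf_bernoulli_True_clamp)
  have F: "pmf (bernoulli_pmf a) False = pmf (bernoulli_pmf (max 0 (min 1 a))) False"
    by (simp only: pmf_bernoulli_False_clamp)
  fix i show "pmf (bernoulli_pmf a) i = pmf (bernoulli_pmf (max 0 (min 1 a))) i"
    using T F by (cases i) auto
qed

lemma pmf_edge:
  assumes "finite S"
  shows "pmf (edge_pmf p P S) (Some (xs, C)) =
           max 0 (min 1 p) * (indicator (permutations_of_set S) xs / fact (card S)) * pmf P C"
proof -
  have ne: "permutations_of_set S \<noteq> {}" using assms by (simp add: permutations_of_set_nonempty)
  have inner: "do { xs \<leftarrow> pmf_of_set {xs. distinct xs \<and> set xs = S}; C \<leftarrow> P; return_pmf (Some (xs, C)) }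
        = map_pmf Some (pair_pmf (pmf_of_set (permutations_of_set S)) P)"
    by (simp add: pair_pmf_def map_bind_pmf permutations_of_set_def conj_commute)
  have "pmf (map_pmf Some (pair_pmf (pmf_of_set (permutations_of_set S)) P)) (Some (xs, C))
      = indicator (permutations_of_set S) xs / fact (card S) * pmf P C"
    using assms ne by (simp add: pmf_map_inj' pmf_pair)
  moreover have "pmf (return_pmf None) (Some (xs, C)) = 0" by simp
  ultimately show ?thesis
    unfolding edge_pmf_def inner
    by (subst bernoulli_clamp) (simp add: pmf_bind)
qed

definition chooseo :: "('a \<Rightarrow> bool) \<Rightarrow> 'a option" where
  "chooseo B = (if \<exists>x. B x then Some (SOME x. B x) else None)"

definition uniq :: "('a \<Rightarrow> bool) \<Rightarrow> bool" where
  "uniq B = (\<forall>a b. B a \<longrightarrow> B b \<longrightarrow> a = b)"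

definition Psi :: "('a \<Rightarrow> bool) \<Rightarrow> 'a option option" where
  "Psi B = (if uniq B then Some (chooseo B) else None)"

abbreviation grpH where "grpH n k P \<equiv> grp (JJ n k P) gset (ksets n k) False"

lemma chooseo_single[simp]: "chooseo (\<lambda>j. j = x) = Some x"
  by (simp add: chooseo_def)

lemma chooseo_empty[simp]: "chooseo (\<lambda>j. False) = None"
  by (simp add: chooseo_def)

lemma chooseo_SomeD: "chooseo B = Some x \<Longrightarrow> B x"
  unfolding chooseo_def by (auto split: if_splits intro: someI_ex)

lemma chooseo_uniq: "uniq B \<Longrightarrow> B x \<Longrightarrow> chooseo B = Some x"
  unfolding chooseo_def uniq_def by (auto intro: some_equality)

lemma regroup:
  assumes "finite (set_pmf P)"
  shows "map_pmf (grpH n k P) (CSPhat_model k n p P) = Pi_pmf (ksets n k) (\<lambda>_. False) (ES n k p P)"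
  unfolding hat_eq ES_def JS_def
  by (rule Pi_pmf_group[OF finite_JJ[OF assms] finite_ksets gset_JJ])

lemma CSP_sat_cong:
  assumes "\<And>S. S \<in> ksets n k \<Longrightarrow> F S = F' S"
  shows "CSP_satisfiable d k n F = CSP_satisfiable d k n F'"
  using assms unfolding CSP_satisfiable_def by auto

lemma CSP_sat_anti:
  assumes "CSP_satisfiable d k n F" "\<forall>S. F' S = F S \<or> F' S = None"
  shows "CSP_satisfiable d k n F'"
proof -
  from assms(1) obtain \<sigma> where s: "\<sigma> \<in> assignments d n"
    and h: "\<forall>S\<in>ksets n k. case F S of None \<Rightarrow> True | Some (xs, C) \<Rightarrow> sat_constraint \<sigma> xs C"
    unfolding CSP_satisfiable_def by blast
  have "\<forall>S\<in>ksets n k. case F' S of None \<Rightarrow> True | Some (xs, C) \<Rightarrow> sat_constraint \<sigma> xs C"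
  proof
    fix S assume S: "S \<in> ksets n k"
    from assms(2) have "F' S = F S \<or> F' S = None" by (rule spec)
    thus "case F' S of None \<Rightarrow> True | Some (xs, C) \<Rightarrow> sat_constraint \<sigma> xs C"
      using h S by auto
  qed
  with s show ?thesis unfolding CSP_satisfiable_def by blast
qed

lemma F1:
  assumes "CSPhat_satisfiable d k n P G"
  shows "CSP_satisfiable d k n (\<lambda>S. chooseo (grpH n k P G S))"
proof -
  from assms obtain \<sigma> where s: "\<sigma> \<in> assignments d n"
    and h: "\<forall>xs\<in>ktuples n k. \<forall>C\<in>set_pmf P. G (xs, C) \<longrightarrow> sat_constraint \<sigma> xs C"
    unfolding CSPhat_satisfiable_def by blast
  have "\<forall>S\<in>ksets n k. case chooseo (grpH n k P G S) of None \<Rightarrow> True | Some (xs, C) \<Rightarrow> sat_constraint \<sigma> xs C"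
  proof
    fix S assume S: "S \<in> ksets n k"
    show "case chooseo (grpH n k P G S) of None \<Rightarrow> True | Some (xs, C) \<Rightarrow> sat_constraint \<sigma> xs C"
    proof (cases "chooseo (grpH n k P G S)")
      case (Some x)
      obtain xs C where x: "x = (xs, C)" by (cases x)
      from chooseo_SomeD[OF Some] S have "(xs, C) \<in> JJ n k P" "G (xs, C)"
        by (auto simp: grp_def x split: if_splits)
      hence "sat_constraint \<sigma> xs C" using h by (auto simp: JJ_def)
      thus ?thesis using Some x by simp
    qed simp
  qed
  with s show ?thesis unfolding CSP_satisfiable_def by blast
qed

lemma F2:
  assumes "\<forall>S\<in>ksets n k. uniq (grpH n k P G S)"
    and "CSP_satisfiable d k n (\<lambda>S. chooseo (grpH n k P G S))"
  shows "CSPhat_satisfiable d k n P G"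
proof -
  from assms(2) obtain \<sigma> where s: "\<sigma> \<in> assignments d n"
    and h: "\<forall>S\<in>ksets n k. case chooseo (grpH n k P G S) of None \<Rightarrow> True | Some (xs, C) \<Rightarrow> sat_constraint \<sigma> xs C"
    unfolding CSP_satisfiable_def by blast
  have "\<forall>xs\<in>ktuples n k. \<forall>C\<in>set_pmf P. G (xs, C) \<longrightarrow> sat_constraint \<sigma> xs C"
  proof (intro ballI impI)
    fix xs C assume xs: "xs \<in> ktuples n k" and C: "C \<in> set_pmf P" and G: "G (xs, C)"
    define S where "S = set xs"
    have S: "S \<in> ksets n k" using xs by (auto simp: S_def ktuples_def ksets_def distinct_card)
    have B: "grpH n k P G S (xs, C)" using S xs C G by (simp add: grp_def JJ_def gset_def S_def)
    have "chooseo (grpH n k P G S) = Some (xs, C)"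
      using assms(1) S B by (intro chooseo_uniq) auto
    with h S show "sat_constraint \<sigma> xs C" by force
  qed
  with s show ?thesis unfolding CSPhat_satisfiable_def by blast
qed

lemma pmf_map_Some_None[simp]: "pmf (map_pmf Some X) None = 0"
proof -
  have e: "Some -` {None} = {}" by auto
  show ?thesis unfolding pmf_map e by simp
qed

lemma pmf_map_Some_Some: "pmf (map_pmf Some X) (Some x) = pmf X x"
  by (rule pmf_map_inj') (simp add: inj_def)

lemma pmf_edge_JS:
  assumes "S \<in> ksets n k" "p \<le> 1" "finite (set_pmf P)"
  shows "pmf (edge_pmf p P S) (Some x) = (if x \<in> JS n k P S then qcf k p P x else 0)"
proof -
  obtain xs C where x: "x = (xs, C)" by (cases x)
  have fS: "finite S" and cS: "card S = k" using assms(1) by (auto simp: ksets_def intro: finite_subset)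
  have "pmf (edge_pmf p P S) (Some x) = max 0 p * (indicator (permutations_of_set S) xs / fact k) * pmf P C"
    using pmf_edge[OF fS, of p P xs C] assms(2) cS x by simp
  also have "\<dots> = (if x \<in> JS n k P S then qcf k p P x else 0)"
    using assms x by (auto simp: JS_eq qcf_eq indicator_def set_pmf_eq)
  finally show ?thesis .
qed

lemma L1:
  assumes fin: "finite (set_pmf P)" and p: "p \<le> 1" and p': "p' \<le> 1"
    and pp: "max 0 p' \<le> max 0 p * (1 - max 0 p)"
  shows "CSPhat_sat_prob d k P n p \<le> CSP_sat_prob d k P n p'"
proof -
  let ?I = "ksets n k"
  let ?Q = "CSP_satisfiable d k n"
  define D where "D = (\<lambda>S. map_pmf chooseo (ES n k p P S))"
  have "CSPhat_sat_prob d k P n p = measure (CSPhat_model k n p P) {G. CSPhat_satisfiable d k n P G}"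
    by (simp add: CSPhat_sat_prob_def)
  also have "\<dots> \<le> measure (CSPhat_model k n p P) {G. ?Q (\<lambda>S. chooseo (grpH n k P G S))}"
    by (intro measure_pmf.finite_measure_mono) (auto intro: F1)
  also have "\<dots> = measure (map_pmf (grpH n k P) (CSPhat_model k n p P)) {H. ?Q (\<lambda>S. chooseo (H S))}"
    by simp
  also have "\<dots> = measure (Pi_pmf ?I (\<lambda>_. False) (ES n k p P)) {H. ?Q (\<lambda>S. chooseo (H S))}"
    by (simp only: regroup[OF fin])
  also have "\<dots> = measure (map_pmf (\<lambda>h. chooseo \<circ> h) (Pi_pmf ?I (\<lambda>_. False) (ES n k p P))) {F. ?Q F}"
    by (simp add: o_def)
  also have "\<dots> = measure (Pi_pmf ?I None D) {F. ?Q F}"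
    unfolding D_def by (subst Pi_pmf_map[OF finite_ksets]) simp_all
  also have "\<dots> \<le> measure (Pi_pmf ?I (Some None) (\<lambda>S. map_pmf Some (edge_pmf p' P S)))
                    {F. (\<forall>i\<in>?I. F i \<noteq> None) \<and> ?Q (\<lambda>i. the (F i))}"
  proof -
    have "(\<Prod>i\<in>?I. (1::real)) * measure (Pi_pmf ?I None D) {F. ?Q F}
        \<le> measure (Pi_pmf ?I (Some None) (\<lambda>S. map_pmf Some (edge_pmf p' P S)))
                    {F. (\<forall>i\<in>?I. F i \<noteq> None) \<and> ?Q (\<lambda>i. the (F i))}"
    proof (rule coupling[OF finite_ksets])
      fix S x assume S: "S \<in> ?I"
      show "pmf (map_pmf Some (edge_pmf p' P S)) (Some (Some x)) \<le> 1 * pmf (D S) (Some x)"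
      proof (cases "x \<in> JS n k P S")
        case False
        thus ?thesis using pmf_edge_JS[OF S p' fin] by (simp add: pmf_map_Some_Some)
      next
        case True
        obtain xs C where x: "x = (xs, C)" by (cases x)
        have "pmf (map_pmf Some (edge_pmf p' P S)) (Some (Some x)) = qcf k p' P x"
          using pmf_edge_JS[OF S p' fin] True by (simp add: pmf_map_Some_Some)
        also have "\<dots> = pmf P C * max 0 p' / fact k" using x p' by (simp add: qcf_eq)
        also have "\<dots> \<le> pmf P C * (max 0 p * (1 - max 0 p)) / fact k"
          using pp by (intro divide_right_mono mult_left_mono) auto
        also have "\<dots> = qcf k p P x * (1 - max 0 p)" using x p by (simp add: qcf_eq)
        also have "\<dots> \<le> pmf (ES n k p P S) (\<lambda>j. j = x)"
          by (rule pmf_ES_single_bounds(1)[OF True fin S p])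
        also have "\<dots> = measure (ES n k p P S) {\<lambda>j. j = x}" by (simp add: measure_pmf_single)
        also have "\<dots> \<le> measure (ES n k p P S) (chooseo -` {Some x})"
          by (intro measure_pmf.finite_measure_mono) auto
        also have "\<dots> = pmf (D S) (Some x)" by (simp add: D_def pmf_map)
        finally show ?thesis by simp
      qed
    next
      fix F F' assume "?Q F" "\<forall>i. F' i = F i \<or> F' i = None"
      thus "?Q F'" by (rule CSP_sat_anti)
    qed simp_all
    thus ?thesis by simp
  qed
  also have "\<dots> = measure (map_pmf (\<lambda>h. Some \<circ> h) (Pi_pmf ?I None (edge_pmf p' P)))
                    {F. (\<forall>i\<in>?I. F i \<noteq> None) \<and> ?Q (\<lambda>i. the (F i))}"
    by (subst Pi_pmf_map[OF finite_ksets]) simp_all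
  also have "\<dots> = CSP_sat_prob d k P n p'"
    by (simp add: CSP_sat_prob_def CSP_model_def o_def)
  finally show ?thesis .
qed

lemma Psi_empty[simp]: "Psi (\<lambda>j. False) = Some None"
  by (simp add: Psi_def uniq_def)

lemma Psi_single[simp]: "Psi (\<lambda>j. j = x) = Some (Some x)"
  by (simp add: Psi_def uniq_def)

lemma Psi_SS: "Psi B = Some (Some x) \<Longrightarrow> B = (\<lambda>j. j = x)"
  unfolding Psi_def using chooseo_SomeD[of B x]
  by (auto simp: uniq_def split: if_splits)

lemma Psi_SN: "Psi B = Some None \<Longrightarrow> B = (\<lambda>j. False)"
  unfolding Psi_def chooseo_def by (auto split: if_splits)

lemma L2:
  assumes fin: "finite (set_pmf P)" and p: "p \<le> 1" and p': "p' \<le> 1"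
    and pp: "max 0 p \<le> (1 - max 0 p) * max 0 p'"
  shows "(1 - (max 0 p)\<^sup>2) ^ card (ksets n k) * CSP_sat_prob d k P n p' \<le> CSPhat_sat_prob d k P n p"
proof -
  let ?I = "ksets n k"
  let ?Q = "CSP_satisfiable d k n"
  let ?pp = "max 0 p"
  define M where "M = (\<lambda>S. map_pmf Psi (ES n k p P S))"
  define g where "g = (\<lambda>S. 1 - pmf (M S) None)"
  let ?E = "{F. (\<forall>i\<in>?I. F i \<noteq> None) \<and> ?Q (\<lambda>i. the (F i))}"
  have pp01: "0 \<le> ?pp" "?pp \<le> 1" using p by auto
  have MSS: "pmf (M S) (Some (Some x)) = pmf (ES n k p P S) (\<lambda>j. j = x)" for S x
  proof -
    have e: "Psi -` {Some (Some x)} = {\<lambda>j. j = x}" using Psi_SS by auto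
    show ?thesis unfolding M_def pmf_map e measure_pmf_single ..
  qed
  have MSN: "pmf (M S) (Some None) = pmf (ES n k p P S) (\<lambda>j. False)" for S
  proof -
    have e: "Psi -` {Some None} = {\<lambda>j. False}" using Psi_SN by auto
    show ?thesis unfolding M_def pmf_map e measure_pmf_single ..
  qed
  have g_ge_SN: "pmf (M S) (Some None) \<le> g S" for S
  proof -
    have "g S = measure (M S) (UNIV - {None})"
      unfolding g_def using measure_pmf.prob_compl[of "{None}" "M S"] by (simp add: measure_pmf_single)
    also have "measure (M S) {Some None} \<le> \<dots>" by (intro measure_pmf.finite_measure_mono) auto
    finally show ?thesis by (simp add: measure_pmf_single)
  qed
  have gS1: "1 - ?pp \<le> g S" if S: "S \<in> ?I" for S
    using g_ge_SN[of S] MSN[of S] pmf_ES_empty_bound[OF fin S p] by simp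
  have gS2: "1 - ?pp\<^sup>2 \<le> g S" if S: "S \<in> ?I" for S
  proof -
    have fJ: "finite (JS n k P S)" by (rule finite_JS[OF fin])
    have "g S = measure (M S) (UNIV - {None})"
      unfolding g_def using measure_pmf.prob_compl[of "{None}" "M S"] by (simp add: measure_pmf_single)
    also have "measure (M S) (insert (Some None) ((\<lambda>x. Some (Some x)) ` JS n k P S)) \<le> \<dots>"
      by (intro measure_pmf.finite_measure_mono) auto
    also have "measure (M S) (insert (Some None) ((\<lambda>x. Some (Some x)) ` JS n k P S))
        = pmf (M S) (Some None) + (\<Sum>x\<in>JS n k P S. pmf (M S) (Some (Some x)))"
    proof -
      have i: "inj_on (\<lambda>x. Some (Some x)) (JS n k P S)" by (simp add: inj_on_def)
      have "measure (M S) (insert (Some None) ((\<lambda>x. Some (Some x)) ` JS n k P S))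
          = sum (pmf (M S)) (insert (Some None) ((\<lambda>x. Some (Some x)) ` JS n k P S))"
        using fJ by (intro measure_measure_pmf_finite) simp
      also have "\<dots> = pmf (M S) (Some None) + sum (pmf (M S)) ((\<lambda>x. Some (Some x)) ` JS n k P S)"
        using fJ by (intro sum.insert) auto
      also have "sum (pmf (M S)) ((\<lambda>x. Some (Some x)) ` JS n k P S) = (\<Sum>x\<in>JS n k P S. pmf (M S) (Some (Some x)))"
        using sum.reindex[OF i, of "pmf (M S)"] by (simp add: o_def)
      finally show ?thesis .
    qed
    finally have "pmf (M S) (Some None) + (\<Sum>x\<in>JS n k P S. pmf (M S) (Some (Some x))) \<le> g S" .
    moreover have "1 - ?pp \<le> pmf (M S) (Some None)"
      using MSN[of S] pmf_ES_empty_bound[OF fin S p] by simp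
    moreover have "(\<Sum>x\<in>JS n k P S. qcf k p P x * (1 - ?pp)) \<le> (\<Sum>x\<in>JS n k P S. pmf (M S) (Some (Some x)))"
      using MSS pmf_ES_single_bounds(1)[OF _ fin S p] by (intro sum_mono) auto
    moreover have "(\<Sum>x\<in>JS n k P S. qcf k p P x * (1 - ?pp)) = ?pp * (1 - ?pp)"
      using sum_qcf[OF S p fin] by (simp add: sum_distrib_right[symmetric])
    ultimately have "1 - ?pp + ?pp * (1 - ?pp) \<le> g S" by linarith
    thus ?thesis by (simp add: power2_eq_square algebra_simps)
  qed
  have prodg: "(1 - ?pp\<^sup>2) ^ card ?I \<le> (\<Prod>S\<in>?I. g S)"
  proof -
    have "(\<Prod>S\<in>?I. 1 - ?pp\<^sup>2) \<le> (\<Prod>S\<in>?I. g S)"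
      using gS2 pp01 by (intro prod_mono) (auto simp: power_le_one abs_le_iff power2_eq_square mult_le_one)
    thus ?thesis by simp
  qed
  have coup: "(\<Prod>S\<in>?I. g S) * measure (Pi_pmf ?I None (edge_pmf p' P)) {F. ?Q F}
      \<le> measure (Pi_pmf ?I (Some None) M) ?E"
  proof (rule coupling[OF finite_ksets])
    fix S assume S: "S \<in> ?I"
    show "0 \<le> g S \<and> g S \<le> 1" by (simp add: g_def pmf_le_1)
    show "pmf (M S) None = 1 - g S" by (simp add: g_def)
    fix x
    show "pmf (M S) (Some (Some x)) \<le> g S * pmf (edge_pmf p' P S) (Some x)"
    proof (cases "x \<in> JS n k P S")
      case False
      have "pmf (ES n k p P S) (\<lambda>j. j = x) = 0"
        unfolding ES_def
      proof (rule pmf_Pi_outside[OF finite_JS[OF fin]])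
        show "\<exists>y. y \<notin> JS n k P S \<and> (y = x) \<noteq> False" using False by blast
      qed
      moreover have "0 \<le> g S" by (simp add: g_def pmf_le_1)
      ultimately show ?thesis using MSS by simp
    next
      case True
      obtain xs C where x: "x = (xs, C)" by (cases x)
      have "pmf (M S) (Some (Some x)) \<le> qcf k p P x"
        using MSS pmf_ES_single_bounds(2)[OF True fin S p] by simp
      also have "\<dots> = pmf P C * ?pp / fact k" using x p by (simp add: qcf_eq)
      also have "\<dots> \<le> pmf P C * ((1 - ?pp) * max 0 p') / fact k"
        using pp by (intro divide_right_mono mult_left_mono) auto
      also have "\<dots> = (1 - ?pp) * qcf k p' P x" using x p' by (simp add: qcf_eq)
      also have "\<dots> \<le> g S * qcf k p' P x"
        using gS1[OF S] qcf_01 by (intro mult_right_mono) auto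
      also have "qcf k p' P x = pmf (edge_pmf p' P S) (Some x)"
        using pmf_edge_JS[OF S p' fin] True by simp
      finally show ?thesis .
    qed
  next
    fix F F' assume "?Q F" "\<forall>i. F' i = F i \<or> F' i = None"
    thus "?Q F'" by (rule CSP_sat_anti)
  qed
  have "measure (Pi_pmf ?I (Some None) M) ?E
      = measure (map_pmf (\<lambda>h. Psi \<circ> h) (Pi_pmf ?I (\<lambda>_. False) (ES n k p P))) ?E"
    unfolding M_def by (subst Pi_pmf_map[OF finite_ksets]) simp_all
  also have "\<dots> = measure (map_pmf (grpH n k P) (CSPhat_model k n p P)) ((\<lambda>h. Psi \<circ> h) -` ?E)"
    by (simp only: measure_map_pmf regroup[OF fin])
  also have "\<dots> \<le> measure (CSPhat_model k n p P) {G. CSPhat_satisfiable d k n P G}"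
    unfolding measure_map_pmf
  proof (intro measure_pmf.finite_measure_mono subsetI, simp only: mem_Collect_eq vimage_def o_def)
    fix G assume G: "(\<forall>i\<in>?I. Psi (grpH n k P G i) \<noteq> None) \<and> ?Q (\<lambda>i. the (Psi (grpH n k P G i)))"
    have u: "\<forall>S\<in>?I. uniq (grpH n k P G S)" using G by (auto simp: Psi_def split: if_splits)
    have "?Q (\<lambda>S. chooseo (grpH n k P G S)) = ?Q (\<lambda>i. the (Psi (grpH n k P G i)))"
      using u by (intro CSP_sat_cong) (simp add: Psi_def)
    with G have "?Q (\<lambda>S. chooseo (grpH n k P G S))" by simp
    from F2[OF u this] show "CSPhat_satisfiable d k n P G" .
  qed simp
  also have "\<dots> = CSPhat_sat_prob d k P n p" by (simp add: CSPhat_sat_prob_def)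
  finally have h: "(\<Prod>S\<in>?I. g S) * CSP_sat_prob d k P n p' \<le> CSPhat_sat_prob d k P n p"
    using coup by (simp add: CSP_sat_prob_def CSP_model_def)
  have "(1 - ?pp\<^sup>2) ^ card ?I * CSP_sat_prob d k P n p' \<le> (\<Prod>S\<in>?I. g S) * CSP_sat_prob d k P n p'"
    using prodg by (intro mult_right_mono) (simp_all add: CSP_sat_prob_def)
  with h show ?thesis by linarith
qed

lemma card_ksets_le: "real (card (ksets n k)) \<le> real n ^ k"
proof -
  have "ksets n k = {B. B \<subseteq> {0..<n} \<and> card B = k}" by (simp add: ksets_def)
  hence "card (ksets n k) = n choose k" using n_subsets[of "{0..<n}" k] by simp
  also have "\<dots> \<le> n ^ k"
    by (cases "k \<le> n") (auto intro: binomial_le_pow simp: binomial_eq_0)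
  finally show ?thesis by (metis of_nat_le_iff of_nat_power)
qed

lemma exp_le_pow:
  fixes x :: real
  assumes "0 \<le> x" "x \<le> 1/2"
  shows "exp (- 2 * real m * x) \<le> (1 - x) ^ m"
proof -
  have "x * x \<le> (1/2) * x" by (rule mult_right_mono[OF assms(2) assms(1)])
  hence "- 2 * x \<le> - x - 2 * x\<^sup>2" by (simp add: power2_eq_square)
  also have "\<dots> \<le> ln (1 - x)" by (rule ln_one_minus_pos_lower_bound[OF assms])
  finally have "exp (- 2 * x) \<le> exp (ln (1 - x))" by simp
  also have "exp (ln (1 - x)) = 1 - x" using assms by simp
  finally have "exp (- 2 * x) \<le> 1 - x" .
  hence "exp (- 2 * x) ^ m \<le> (1 - x) ^ m" by (intro power_mono) auto
  moreover have "exp (- 2 * x) ^ m = exp (- 2 * real m * x)"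
    by (simp add: exp_of_nat_mult[symmetric] algebra_simps)
  ultimately show ?thesis by simp
qed

lemma u_tendsto:
  fixes c :: "nat \<Rightarrow> real"
  assumes k: "k \<ge> 2" and pos: "\<And>n. c n > 0" and B: "eventually (\<lambda>n. c n \<le> B) sequentially"
  shows "(\<lambda>n. c n / real n ^ (k - 1)) \<longlonglongrightarrow> 0"
proof (rule tendsto_sandwich[of "\<lambda>_. 0" _ _ "\<lambda>n. B / real n"])
  show "eventually (\<lambda>n. 0 \<le> c n / real n ^ (k - 1)) sequentially"
    using pos by (intro always_eventually allI) (simp add: less_imp_le)
  show "eventually (\<lambda>n. c n / real n ^ (k - 1) \<le> B / real n) sequentially"
    using B eventually_ge_at_top[of "1::nat"]
  proof eventually_elim
    case (elim n)
    have n1: "real n \<ge> 1" using elim by simp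
    have "real n ^ 1 \<le> real n ^ (k - 1)" using n1 k by (intro power_increasing) auto
    hence nn: "real n \<le> real n ^ (k - 1)" by simp
    have "c n / real n ^ (k - 1) \<le> B / real n ^ (k - 1)"
      using elim n1 by (intro divide_right_mono) auto
    also have "\<dots> \<le> B / real n"
      using nn n1 elim pos[of n] by (intro divide_left_mono) auto
    finally show ?case .
  qed
qed (auto intro: lim_const_over_n)

lemma aux_cancel: fixes a :: real shows "a \<noteq> 0 \<Longrightarrow> a * (x / (a * y)) = x / y"
  by (cases "y = 0") (simp_all add: field_simps)

lemma w_bound:
  fixes c :: "nat \<Rightarrow> real"
  assumes k: "k \<ge> 2" and pos: "\<And>n. c n > 0" and n: "n \<ge> 1" and cB: "c n \<le> B"
  shows "real (card (ksets n k)) * (a * (c n / real n ^ (k - 1)))\<^sup>2 \<le> a\<^sup>2 * B\<^sup>2 / real n ^ (k - 2)"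
proof -
  have n1: "real n \<ge> 1" using n by simp
  have e: "(real n ^ (k - 1))\<^sup>2 = real n ^ k * real n ^ (k - 2)"
  proof -
    have "2 * (k - 1) = k + (k - 2)" using k by simp
    thus ?thesis by (simp add: power_mult[symmetric] power_add[symmetric] mult.commute)
  qed
  have npos: "real n ^ k > 0" "real n ^ (k - 2) > 0" using n1 by auto
  have "(a * (c n / real n ^ (k - 1)))\<^sup>2 = a\<^sup>2 * (c n)\<^sup>2 / (real n ^ (k - 1))\<^sup>2"
    by (simp only: power_mult_distrib power_divide times_divide_eq_right)
  also have "\<dots> = a\<^sup>2 * (c n)\<^sup>2 / (real n ^ k * real n ^ (k - 2))"
    by (simp only: e)
  also have "\<dots> \<le> a\<^sup>2 * B\<^sup>2 / (real n ^ k * real n ^ (k - 2))"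
    using cB pos[of n] npos by (intro divide_right_mono mult_left_mono power_mono) auto
  finally have h: "(a * (c n / real n ^ (k - 1)))\<^sup>2 \<le> a\<^sup>2 * B\<^sup>2 / (real n ^ k * real n ^ (k - 2))" .
  have "real (card (ksets n k)) * (a * (c n / real n ^ (k - 1)))\<^sup>2
      \<le> real n ^ k * (a\<^sup>2 * B\<^sup>2 / (real n ^ k * real n ^ (k - 2)))"
    using card_ksets_le h by (intro mult_mono) auto
  also have "\<dots> = a\<^sup>2 * B\<^sup>2 / real n ^ (k - 2)"
    using npos(1) by (intro aux_cancel) simp
  finally show ?thesis .
qed

lemma condL1:
  fixes u a b :: real
  assumes "0 \<le> u" "0 < a" "a * a * u \<le> a - b" "a * u \<le> 1"
  shows "max 0 (b * u) \<le> max 0 (a * u) * (1 - max 0 (a * u))"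
proof -
  have au: "max 0 (a * u) = a * u" using assms by simp
  have "a * a * u * u \<le> (a - b) * u" by (rule mult_right_mono[OF assms(3) assms(1)])
  hence "b * u \<le> a * u * (1 - a * u)" by (simp add: algebra_simps)
  moreover have "0 \<le> a * u * (1 - a * u)" using assms by simp
  ultimately show ?thesis unfolding au by simp
qed

lemma condL2:
  fixes u a0 b :: real
  assumes "0 \<le> u" "0 \<le> a0" "0 \<le> b" "a0 * b * u \<le> b - a0"
  shows "a0 * u \<le> (1 - a0 * u) * max 0 (b * u)"
proof -
  have bu: "max 0 (b * u) = b * u" using assms by simp
  have "a0 * b * u * u \<le> (b - a0) * u" using assms by (intro mult_right_mono) auto
  thus ?thesis unfolding bu by (simp add: algebra_simps)
qed

lemma max0_mult: assumes "0 \<le> u" shows "max 0 (a * u) = max 0 a * (u::real)"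
proof (cases "a \<ge> 0")
  case True thus ?thesis using assms by simp
next
  case False
  hence "a * u \<le> 0" using assms by (simp add: mult_nonpos_nonneg)
  thus ?thesis using False by simp
qed

lemma sat_prob_01: "0 \<le> CSP_sat_prob d k P n p" "CSP_sat_prob d k P n p \<le> 1"
  "0 \<le> CSPhat_sat_prob d k P n p" "CSPhat_sat_prob d k P n p \<le> 1"
  by (simp_all add: CSP_sat_prob_def CSPhat_sat_prob_def)

lemma ST_unpack:
  assumes "sharp_threshold k sp" "k \<ge> 2"
  obtains c B where "\<And>n. c n > 0" "c \<in> \<Theta>(\<lambda>_. 1)" "eventually (\<lambda>n. c n \<le> B) sequentially"
    "\<And>\<epsilon>. \<epsilon> > 0 \<Longrightarrow> (\<lambda>n. sp n ((1 - \<epsilon>) * c n / real n ^ (k - 1))) \<longlonglongrightarrow> 1"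
    "\<And>\<epsilon>. \<epsilon> > 0 \<Longrightarrow> (\<lambda>n. sp n ((1 + \<epsilon>) * c n / real n ^ (k - 1))) \<longlonglongrightarrow> 0"
    "(\<lambda>n. c n / real n ^ (k - 1)) \<longlonglongrightarrow> 0"
proof -
  from assms(1) obtain c where pos: "\<And>n. c n > 0" and th: "c \<in> \<Theta>(\<lambda>_. 1)"
    and lim: "\<forall>\<epsilon>>0. ((\<lambda>n. sp n ((1 - \<epsilon>) * c n / real n ^ (k - 1))) \<longlonglongrightarrow> 1) \<and>
           ((\<lambda>n. sp n ((1 + \<epsilon>) * c n / real n ^ (k - 1))) \<longlonglongrightarrow> 0)"
    unfolding sharp_threshold_def by blast
  have "c \<in> O(\<lambda>_. 1)" using th by (rule bigthetaD1)
  then obtain C where C: "C > 0" "eventually (\<lambda>n. norm (c n) \<le> C * norm (1::real)) at_top"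
    by (rule landau_o.bigE)
  have B: "eventually (\<lambda>n. c n \<le> C) sequentially"
    using C(2) by eventually_elim simp
  show ?thesis
    using that[OF pos th B] lim u_tendsto[OF assms(2) pos B] by blast
qed

lemma ev_small:
  assumes "(u \<longlonglongrightarrow> (0::real))" "\<delta> > 0"
  shows "eventually (\<lambda>n. u n \<le> \<delta>) sequentially"
  using order_tendstoD(2)[OF assms] by eventually_elim simp

lemma dir1:
  assumes fin: "finite (set_pmf P)" and k: "k \<ge> 2"
    and ST: "sharp_threshold k (CSPhat_sat_prob d k P)"
  shows "sharp_threshold k (CSP_sat_prob d k P)"
proof -
  obtain c B where pos: "\<And>n. c n > 0" and th: "c \<in> \<Theta>(\<lambda>_. 1)"
    and cB: "eventually (\<lambda>n. c n \<le> B) sequentially"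
    and lo: "\<And>\<epsilon>. \<epsilon> > 0 \<Longrightarrow> (\<lambda>n. CSPhat_sat_prob d k P n ((1 - \<epsilon>) * c n / real n ^ (k - 1))) \<longlonglongrightarrow> 1"
    and hi: "\<And>\<epsilon>. \<epsilon> > 0 \<Longrightarrow> (\<lambda>n. CSPhat_sat_prob d k P n ((1 + \<epsilon>) * c n / real n ^ (k - 1))) \<longlonglongrightarrow> 0"
    and u0: "(\<lambda>n. c n / real n ^ (k - 1)) \<longlonglongrightarrow> 0"
    by (rule ST_unpack[OF ST k]) (rule that)
  define u where "u = (\<lambda>n. c n / real n ^ (k - 1))"
  have unn: "0 \<le> u n" for n using pos[of n] by (simp add: u_def less_imp_le)
  have rw: "e * c n / real n ^ (k - 1) = e * u n" for e n by (simp add: u_def)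
  have u0': "u \<longlonglongrightarrow> 0" using u0 by (simp add: u_def)
  show ?thesis
    unfolding sharp_threshold_def
  proof (intro exI[of _ c] conjI pos th allI impI)
    fix \<epsilon> :: real assume eps: "\<epsilon> > 0"
    define e' where "e' = min \<epsilon> 1 / 2"
    have e': "0 < e'" "e' \<le> 1/2" "e' \<le> \<epsilon> / 2" using eps by (auto simp: e'_def)
    have ev1: "eventually (\<lambda>n. CSPhat_sat_prob d k P n ((1 - e') * c n / real n ^ (k - 1))
                 \<le> CSP_sat_prob d k P n ((1 - \<epsilon>) * c n / real n ^ (k - 1))) sequentially"
      using ev_small[OF u0' e'(1)]
    proof eventually_elim
      case (elim n)
      let ?a = "1 - e'" and ?b = "1 - \<epsilon>"
      have u1: "u n \<le> 1" using elim e' by simp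
      have a01: "0 < ?a" "?a \<le> 1" using e' by auto
      have "?a * ?a * u n \<le> u n" using a01 unn[of n] by (simp add: mult_le_one mult_left_le_one_le)
      also have "\<dots> \<le> ?a - ?b" using elim e' by simp
      finally have c1: "?a * ?a * u n \<le> ?a - ?b" .
      have c2: "?a * u n \<le> 1" using a01 u1 unn[of n] by (simp add: mult_le_one)
      have "CSPhat_sat_prob d k P n (?a * u n) \<le> CSP_sat_prob d k P n (?b * u n)"
      proof (rule L1[OF fin])
        show "?a * u n \<le> 1" by (rule c2)
        have "?b * u n \<le> 1 * u n" by (rule mult_right_mono) (use eps unn in auto)
        thus "?b * u n \<le> 1" using u1 by simp
        show "max 0 (?b * u n) \<le> max 0 (?a * u n) * (1 - max 0 (?a * u n))"
          by (rule condL1[OF unn a01(1) c1 c2])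
      qed
      thus ?case by (simp only: rw)
    qed
    show "(\<lambda>n. CSP_sat_prob d k P n ((1 - \<epsilon>) * c n / real n ^ (k - 1))) \<longlonglongrightarrow> 1"
    proof (rule tendsto_sandwich[OF ev1 _ lo[OF e'(1)] tendsto_const])
      show "eventually (\<lambda>n. CSP_sat_prob d k P n ((1 - \<epsilon>) * c n / real n ^ (k - 1)) \<le> 1) sequentially"
        by (simp add: sat_prob_01)
    qed
    define a where "a = 1 + \<epsilon> / 2"
    define b where "b = 1 + \<epsilon>"
    have ab: "1 \<le> a" "a \<le> b" "0 < a" "0 < b" using eps by (auto simp: a_def b_def)
    define \<delta> where "\<delta> = min (1 / (2 * b)) ((b - a) / (a * b))"
    have \<delta>: "\<delta> > 0" using ab eps by (auto simp: \<delta>_def a_def b_def)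
    define \<delta>0 where "\<delta>0 = exp (- 2 * (a\<^sup>2 * B\<^sup>2))"
    have \<delta>0: "\<delta>0 > 0" by (simp add: \<delta>0_def)
    have ev2: "eventually (\<lambda>n. CSP_sat_prob d k P n ((1 + \<epsilon>) * c n / real n ^ (k - 1))
               \<le> CSPhat_sat_prob d k P n ((1 + \<epsilon>/2) * c n / real n ^ (k - 1)) / \<delta>0) sequentially"
      using ev_small[OF u0' \<delta>] cB eventually_ge_at_top[of "1::nat"]
    proof eventually_elim
      case (elim n)
      have un: "u n \<le> 1 / (2 * b)" "u n \<le> (b - a) / (a * b)" using elim by (auto simp: \<delta>_def)
      have bu: "b * u n \<le> 1/2" using un(1) ab by (simp add: field_simps)
      have "a * u n \<le> b * u n" by (rule mult_right_mono[OF ab(2) unn])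
      hence au: "a * u n \<le> 1/2" using bu by simp
      have au0: "0 \<le> a * u n" using ab unn[of n] by simp
      have abu: "a * b * u n \<le> b - a" using un(2) ab by (simp add: field_simps)
      have mx: "max 0 (a * u n) = a * u n" using ab unn[of n] by simp
      have L: "(1 - (max 0 (a * u n))\<^sup>2) ^ card (ksets n k) * CSP_sat_prob d k P n (b * u n)
            \<le> CSPhat_sat_prob d k P n (a * u n)"
      proof (rule L2[OF fin])
        show "a * u n \<le> 1" using au by simp
        show "b * u n \<le> 1" using bu by simp
        show "max 0 (a * u n) \<le> (1 - max 0 (a * u n)) * max 0 (b * u n)"
          unfolding mx using condL2[OF unn[of n] _ _ abu] ab by simp
      qed
      have "(a * u n)\<^sup>2 \<le> (1/2)\<^sup>2" by (rule power_mono[OF au au0])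
      hence x0: "0 \<le> (a * u n)\<^sup>2" "(a * u n)\<^sup>2 \<le> 1/2" by (simp_all add: power2_eq_square)
      have "real (card (ksets n k)) * (a * u n)\<^sup>2 \<le> a\<^sup>2 * B\<^sup>2 / real n ^ (k - 2)"
        unfolding u_def by (rule w_bound[where c=c and n=n and B=B and a=a and k=k, OF k pos elim(3) elim(2)])
      also have "\<dots> \<le> a\<^sup>2 * B\<^sup>2"
      proof -
        have n1: "1 \<le> real n ^ (k - 2)" using elim(3) by (simp add: one_le_power)
        have "a\<^sup>2 * B\<^sup>2 * 1 \<le> a\<^sup>2 * B\<^sup>2 * real n ^ (k - 2)"
          by (rule mult_left_mono[OF n1]) simp
        thus ?thesis using n1 by (simp add: divide_le_eq)
      qed
      finally have w: "real (card (ksets n k)) * (a * u n)\<^sup>2 \<le> a\<^sup>2 * B\<^sup>2" .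
      have "\<delta>0 \<le> exp (- 2 * real (card (ksets n k)) * (a * u n)\<^sup>2)"
        unfolding \<delta>0_def using w by simp
      also have "\<dots> \<le> (1 - (a * u n)\<^sup>2) ^ card (ksets n k)" by (rule exp_le_pow[OF x0])
      finally have d0: "\<delta>0 \<le> (1 - (a * u n)\<^sup>2) ^ card (ksets n k)" .
      have "\<delta>0 * CSP_sat_prob d k P n (b * u n) \<le> (1 - (a * u n)\<^sup>2) ^ card (ksets n k) * CSP_sat_prob d k P n (b * u n)"
        using d0 by (intro mult_right_mono) (simp_all add: sat_prob_01)
      also have "\<dots> \<le> CSPhat_sat_prob d k P n (a * u n)" using L mx by simp
      finally have "CSP_sat_prob d k P n (b * u n) \<le> CSPhat_sat_prob d k P n (a * u n) / \<delta>0"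
        using \<delta>0 by (simp add: field_simps)
      thus ?case by (simp only: rw a_def b_def)
    qed
    have "(\<lambda>n. CSPhat_sat_prob d k P n ((1 + \<epsilon>/2) * c n / real n ^ (k - 1)) / \<delta>0) \<longlonglongrightarrow> 0 / \<delta>0"
      using eps by (intro tendsto_divide hi tendsto_const) (use \<delta>0 in auto)
    hence lim0: "(\<lambda>n. CSPhat_sat_prob d k P n ((1 + \<epsilon>/2) * c n / real n ^ (k - 1)) / \<delta>0) \<longlonglongrightarrow> 0" by simp
    show "(\<lambda>n. CSP_sat_prob d k P n ((1 + \<epsilon>) * c n / real n ^ (k - 1))) \<longlonglongrightarrow> 0"
      by (rule tendsto_sandwich[OF _ ev2 tendsto_const lim0]) (simp add: sat_prob_01)
  qed
qed

lemma dir2: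
  assumes fin: "finite (set_pmf P)" and k: "k \<ge> 3"
    and ST: "sharp_threshold k (CSP_sat_prob d k P)"
  shows "sharp_threshold k (CSPhat_sat_prob d k P)"
proof -
  have k2: "k \<ge> 2" using k by simp
  obtain c B where pos: "\<And>n. c n > 0" and th: "c \<in> \<Theta>(\<lambda>_. 1)"
    and cB: "eventually (\<lambda>n. c n \<le> B) sequentially"
    and lo: "\<And>\<epsilon>. \<epsilon> > 0 \<Longrightarrow> (\<lambda>n. CSP_sat_prob d k P n ((1 - \<epsilon>) * c n / real n ^ (k - 1))) \<longlonglongrightarrow> 1"
    and hi: "\<And>\<epsilon>. \<epsilon> > 0 \<Longrightarrow> (\<lambda>n. CSP_sat_prob d k P n ((1 + \<epsilon>) * c n / real n ^ (k - 1))) \<longlonglongrightarrow> 0"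
    and u0: "(\<lambda>n. c n / real n ^ (k - 1)) \<longlonglongrightarrow> 0"
    by (rule ST_unpack[OF ST k2]) (rule that)
  define u where "u = (\<lambda>n. c n / real n ^ (k - 1))"
  have unn: "0 \<le> u n" for n using pos[of n] by (simp add: u_def less_imp_le)
  have rw: "e * c n / real n ^ (k - 1) = e * u n" for e n by (simp add: u_def)
  have u0': "u \<longlonglongrightarrow> 0" using u0 by (simp add: u_def)
  show ?thesis
    unfolding sharp_threshold_def
  proof (intro exI[of _ c] conjI pos th allI impI)
    fix \<epsilon> :: real assume eps: "\<epsilon> > 0"
    define e' where "e' = min \<epsilon> 1 / 2"
    have e': "0 < e'" "e' \<le> 1/2" "e' \<le> \<epsilon> / 2" using eps by (auto simp: e'_def)
    define a0 where "a0 = max 0 (1 - \<epsilon>)"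
    define b where "b = 1 - e'"
    have a0: "0 \<le> a0" "a0 \<le> 1" "a0 \<le> 1 - 2 * e'" using eps by (auto simp: a0_def e'_def)
    have b: "0 < b" "b \<le> 1" "e' \<le> b - a0" using e' a0 by (auto simp: b_def)
    define K where "K = a0\<^sup>2 * B\<^sup>2"
    have ev1: "eventually (\<lambda>n. exp (- 2 * (K / real n)) * CSP_sat_prob d k P n ((1 - e') * c n / real n ^ (k - 1))
                 \<le> CSPhat_sat_prob d k P n ((1 - \<epsilon>) * c n / real n ^ (k - 1))) sequentially"
      using ev_small[OF u0' e'(1)] cB eventually_ge_at_top[of "1::nat"]
    proof eventually_elim
      case (elim n)
      have u1: "u n \<le> 1/2" using elim e' by simp
      have mx: "max 0 ((1 - \<epsilon>) * u n) = a0 * u n" unfolding a0_def by (rule max0_mult[OF unn])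
      have a0u: "a0 * u n \<le> u n" using a0 unn[of n] by (simp add: mult_left_le_one_le)
      have a0u0: "0 \<le> a0 * u n" using a0 unn[of n] by simp
      have "a0 * b * u n \<le> u n" using a0 b unn[of n] by (simp add: mult_le_one mult_left_le_one_le)
      also have "\<dots> \<le> b - a0" using elim b by simp
      finally have abu: "a0 * b * u n \<le> b - a0" .
      have L: "(1 - (max 0 ((1 - \<epsilon>) * u n))\<^sup>2) ^ card (ksets n k) * CSP_sat_prob d k P n (b * u n)
            \<le> CSPhat_sat_prob d k P n ((1 - \<epsilon>) * u n)"
      proof (rule L2[OF fin])
        have "(1 - \<epsilon>) * u n \<le> 1 * u n" by (rule mult_right_mono) (use eps unn in auto)
        thus "(1 - \<epsilon>) * u n \<le> 1" using u1 by simp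
        have "b * u n \<le> 1 * u n" by (rule mult_right_mono) (use b unn in auto)
        thus "b * u n \<le> 1" using u1 by simp
        show "max 0 ((1 - \<epsilon>) * u n) \<le> (1 - max 0 ((1 - \<epsilon>) * u n)) * max 0 (b * u n)"
          unfolding mx by (rule condL2[OF unn a0(1) _ abu]) (use b in simp)
      qed
      have "(a0 * u n)\<^sup>2 \<le> (1/2)\<^sup>2" by (rule power_mono) (use a0u u1 a0u0 in auto)
      hence x0: "0 \<le> (a0 * u n)\<^sup>2" "(a0 * u n)\<^sup>2 \<le> 1/2" by (simp_all add: power2_eq_square)
      have "real (card (ksets n k)) * (a0 * u n)\<^sup>2 \<le> a0\<^sup>2 * B\<^sup>2 / real n ^ (k - 2)"
        unfolding u_def by (rule w_bound[where c=c and n=n and B=B and a=a0 and k=k, OF k2 pos elim(3) elim(2)])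
      also have "\<dots> \<le> K / real n"
      proof -
        have n1: "real n ^ 1 \<le> real n ^ (k - 2)" using elim(3) k by (intro power_increasing) auto
        have np: "0 < real n" using elim(3) by simp
        show ?thesis unfolding K_def using n1 np by (intro divide_left_mono) auto
      qed
      finally have w: "real (card (ksets n k)) * (a0 * u n)\<^sup>2 \<le> K / real n" .
      have "exp (- 2 * (K / real n)) \<le> exp (- 2 * real (card (ksets n k)) * (a0 * u n)\<^sup>2)"
        using w by simp
      also have "\<dots> \<le> (1 - (a0 * u n)\<^sup>2) ^ card (ksets n k)" by (rule exp_le_pow[OF x0])
      finally have d0: "exp (- 2 * (K / real n)) \<le> (1 - (a0 * u n)\<^sup>2) ^ card (ksets n k)" .
      have "exp (- 2 * (K / real n)) * CSP_sat_prob d k P n (b * u n)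
          \<le> (1 - (a0 * u n)\<^sup>2) ^ card (ksets n k) * CSP_sat_prob d k P n (b * u n)"
        using d0 by (intro mult_right_mono) (simp_all add: sat_prob_01)
      also have "\<dots> \<le> CSPhat_sat_prob d k P n ((1 - \<epsilon>) * u n)" using L mx by simp
      finally show ?case by (simp only: rw b_def)
    qed
    have limL: "(\<lambda>n. exp (- 2 * (K / real n)) * CSP_sat_prob d k P n ((1 - e') * c n / real n ^ (k - 1))) \<longlonglongrightarrow> exp (- 2 * 0) * 1"
      by (intro tendsto_mult tendsto_exp tendsto_const lim_const_over_n lo[OF e'(1)])
    show "(\<lambda>n. CSPhat_sat_prob d k P n ((1 - \<epsilon>) * c n / real n ^ (k - 1))) \<longlonglongrightarrow> 1"
    proof (rule tendsto_sandwich[OF ev1 _ _ tendsto_const])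
      show "eventually (\<lambda>n. CSPhat_sat_prob d k P n ((1 - \<epsilon>) * c n / real n ^ (k - 1)) \<le> 1) sequentially"
        by (simp add: sat_prob_01)
      show "(\<lambda>n. exp (- 2 * (K / real n)) * CSP_sat_prob d k P n ((1 - e') * c n / real n ^ (k - 1))) \<longlonglongrightarrow> 1"
        using limL by simp
    qed
    define a where "a = 1 + \<epsilon>"
    define bb where "bb = 1 + \<epsilon> / 2"
    have ab: "1 \<le> bb" "bb \<le> a" "0 < a" using eps by (auto simp: a_def bb_def)
    define \<delta> where "\<delta> = min (1 / a) ((a - bb) / (a * a))"
    have \<delta>: "\<delta> > 0" using ab eps by (auto simp: \<delta>_def a_def bb_def)
    have ev2: "eventually (\<lambda>n. CSPhat_sat_prob d k P n ((1 + \<epsilon>) * c n / real n ^ (k - 1))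
               \<le> CSP_sat_prob d k P n ((1 + \<epsilon>/2) * c n / real n ^ (k - 1))) sequentially"
      using ev_small[OF u0' \<delta>]
    proof eventually_elim
      case (elim n)
      have un: "u n \<le> 1 / a" "u n \<le> (a - bb) / (a * a)" using elim by (auto simp: \<delta>_def)
      have au: "a * u n \<le> 1" using un(1) ab by (simp add: field_simps)
      have aau: "a * a * u n \<le> a - bb" using un(2) ab by (simp add: field_simps)
      have "bb * u n \<le> a * u n" by (rule mult_right_mono[OF ab(2) unn])
      hence bu: "bb * u n \<le> 1" using au by simp
      have "CSPhat_sat_prob d k P n (a * u n) \<le> CSP_sat_prob d k P n (bb * u n)"
        by (rule L1[OF fin au bu condL1[OF unn ab(3) aau au]])
      thus ?case by (simp only: rw a_def bb_def)
    qed
    show "(\<lambda>n. CSPhat_sat_prob d k P n ((1 + \<epsilon>) * c n / real n ^ (k - 1))) \<longlonglongrightarrow> 0"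
      by (rule tendsto_sandwich[OF _ ev2 tendsto_const hi]) (use eps in \<open>simp_all add: sat_prob_01\<close>)
  qed
qed

theorem lemma1:
  fixes d k :: nat and P :: "nat list set pmf"
  assumes "d \<ge> 2" and "k \<ge> 2"
    and "set_pmf P \<subseteq> constraints d k"
  shows "(sharp_threshold k (CSPhat_sat_prob d k P) \<longrightarrow> sharp_threshold k (CSP_sat_prob d k P))
       \<and> (k \<ge> 3 \<longrightarrow> sharp_threshold k (CSP_sat_prob d k P) \<longrightarrow> sharp_threshold k (CSPhat_sat_prob d k P))"
proof -
  have fin: "finite (set_pmf P)" using assms(3) finite_constraints finite_subset by blast
  show ?thesis using dir1[OF fin assms(2)] dir2[OF fin] by blast
qed

end
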